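(* Let $H$ be a graph with $1\le\delta(H)\le|V(H)|-2$ and let $\{\mathcal H_i\}_{i=1}^s$ be a $d$-sequence of $H$ with $Z=\min\{z_i(H): 2\le i\le s\}\le 0$. Let $G=H+K_{1,k}$. If $k\ge d_H-Z$, then $str(G)=|V(G)|+1$.
   Context: For a graph $G$ of order $p$, a numbering is a bijection $f:V(G)\to[1,p]$; $str_f(G)=\max\{f(u)+f(v): uv\in E(G)\}$ and $str(G)=\min_f str_f(G)$. $G+H$ is disjoint union; $K_{1,k}$ is the star with $k$ leaves; $mK_1$ is the edgeless graph on $m$ vertices; $K_r$ the complete graph. $d$-sequence: Let $G$ have order $p$ with $1\le\delta(G)\le p-2$. Set $\mathcal G_1=G_1=G$, $m_1=0$. For each $i$, write $\mathcal G_i=m_iK_1+G_i$, where $m_i\ge0$ is the number of isolated vertices of $\mathcal G_i$ and $G_i$ has no isolated vertices. If $\mathcal G_i$ is neither of the form $mK_1$ ($m\ge1$) nor $mK_1+K_r$ ($m\ge0$, $r\ge2$), choose any vertex $u_i$ of $G_i$, put $d_i=\deg_{G_i}(u_i)$, and let $\mathcal G_{i+1}$ be obtained from $G_i$ by deleting $u_i$ together with all its neighbours in $G_i$. Stop at the first index $s$ ($s\ge 2$) for which $\mathcal G_s$ is $m_sK_1$ with $m_s\ge1$ (then set $d_s=0$) or $m_sK_1+K_r$ with $m_s\ge0$, $r\ge2$ (then $d_s=r-1$). The sequence $\{\mathcal G_i\}_{i=1}^s$ is a $d$-sequence of $G$. Write $d_G=d_1$, $y_j(G)=m_j+1-d_j$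 and $z_i(G)=\sum_{j=2}^i y_j(G)$ for $2\le i\le s$. *)

theory Defs
  imports Main
begin

definition graph :: "'a set \<Rightarrow> 'a set set \<Rightarrow> bool" where
  "graph V E \<longleftrightarrow> finite V \<and> V \<noteq> {} \<and>
     (\<forall>e\<in>E. \<exists>x y. e = {x, y} \<and> x \<in> V \<and> y \<in> V \<and> x \<noteq> y)"

definition degree :: "'a set \<Rightarrow> 'a set set \<Rightarrow> 'a \<Rightarrow> nat" where
  "degree V E v = card {w \<in> V. {v, w} \<in> E}"

definition min_degree :: "'a set \<Rightarrow> 'a set set \<Rightarrow> nat" where
  "min_degree V E = Min (degree V E ` V)"

definition numbering :: "'a set \<Rightarrow> ('a \<Rightarrow> nat) \<Rightarrow> bool" where
  "numbering V f \<longleftrightarrow> bij_betw f V {1..card V}"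

definition str_f :: "'a set set \<Rightarrow> ('a \<Rightarrow> nat) \<Rightarrow> nat" where
  "str_f E f = Max {f u + f v | u v. {u, v} \<in> E}"

definition strength :: "'a set \<Rightarrow> 'a set set \<Rightarrow> nat" where
  "strength V E = Min {str_f E f | f. numbering V f}"

text \<open>Disjoint union H + K_{1,k}: H on the Inl side, the star on Inr 0 (centre)
  and Inr 1, ..., Inr k (leaves).\<close>

definition plus_star_V :: "'a set \<Rightarrow> nat \<Rightarrow> ('a + nat) set" where
  "plus_star_V V k = Inl ` V \<union> Inr ` {0..k}"

definition plus_star_E :: "'a set set \<Rightarrow> nat \<Rightarrow> ('a + nat) set set" where
  "plus_star_E E k = (image Inl) ` E \<union> {{Inr 0, Inr j} | j. j \<in> {1..k}}"

text \<open>Induced subgraphs of H = (V,E) are described by their vertex sets W.\<close>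

definition isolated_in :: "'a set set \<Rightarrow> 'a set \<Rightarrow> 'a set" where
  "isolated_in E W = {v \<in> W. \<not> (\<exists>w\<in>W. {v, w} \<in> E)}"

definition nonisolated_in :: "'a set set \<Rightarrow> 'a set \<Rightarrow> 'a set" where
  "nonisolated_in E W = {v \<in> W. \<exists>w\<in>W. {v, w} \<in> E}"

definition nbrs_in :: "'a set set \<Rightarrow> 'a set \<Rightarrow> 'a \<Rightarrow> 'a set" where
  "nbrs_in E W u = {w \<in> W. {u, w} \<in> E}"

text \<open>H[W] is of the form m K_1 with m \<ge> 1.\<close>
definition edgeless_form :: "'a set set \<Rightarrow> 'a set \<Rightarrow> bool" where
  "edgeless_form E W \<longleftrightarrow> W \<noteq> {} \<and> nonisolated_in E W = {}"

text \<open>H[W] is of the form m K_1 + K_r with m \<ge> 0, r \<ge> 2.\<close>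
definition complete_form :: "'a set set \<Rightarrow> 'a set \<Rightarrow> bool" where
  "complete_form E W \<longleftrightarrow> card (nonisolated_in E W) \<ge> 2 \<and>
     (\<forall>x\<in>nonisolated_in E W. \<forall>y\<in>nonisolated_in E W. x \<noteq> y \<longrightarrow> {x, y} \<in> E)"

definition stop_form :: "'a set set \<Rightarrow> 'a set \<Rightarrow> bool" where
  "stop_form E W \<longleftrightarrow> edgeless_form E W \<or> complete_form E W"

text \<open>A d-sequence of H = (V,E): length s, vertex sets W 1, ..., W s of the graphs
  \<G>_i (as induced subgraphs of H) and chosen vertices u 1, ..., u (s-1).\<close>
definition d_sequence :: "'a set \<Rightarrow> 'a set set \<Rightarrow> nat \<Rightarrow> (nat \<Rightarrow> 'a set) \<Rightarrow> (nat \<Rightarrow> 'a) \<Rightarrow> bool" where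
  "d_sequence V E s W u \<longleftrightarrow> 2 \<le> s \<and> W 1 = V \<and>
     (\<forall>i. 1 \<le> i \<and> i < s \<longrightarrow>
        \<not> stop_form E (W i) \<and> u i \<in> nonisolated_in E (W i) \<and>
        W (Suc i) = nonisolated_in E (W i) - insert (u i) (nbrs_in E (nonisolated_in E (W i)) (u i))) \<and>
     stop_form E (W s)"

definition dseq_m :: "'a set set \<Rightarrow> (nat \<Rightarrow> 'a set) \<Rightarrow> nat \<Rightarrow> nat" where
  "dseq_m E W i = card (isolated_in E (W i))"

definition dseq_d :: "'a set set \<Rightarrow> nat \<Rightarrow> (nat \<Rightarrow> 'a set) \<Rightarrow> (nat \<Rightarrow> 'a) \<Rightarrow> nat \<Rightarrow> nat" where
  "dseq_d E s W u i =
     (if i < s then card (nbrs_in E (nonisolated_in E (W i)) (u i))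
      else if edgeless_form E (W i) then 0
      else card (nonisolated_in E (W i)) - 1)"

definition dseq_y :: "'a set set \<Rightarrow> nat \<Rightarrow> (nat \<Rightarrow> 'a set) \<Rightarrow> (nat \<Rightarrow> 'a) \<Rightarrow> nat \<Rightarrow> int" where
  "dseq_y E s W u j = int (dseq_m E W j) + 1 - int (dseq_d E s W u j)"

definition dseq_z :: "'a set set \<Rightarrow> nat \<Rightarrow> (nat \<Rightarrow> 'a set) \<Rightarrow> (nat \<Rightarrow> 'a) \<Rightarrow> nat \<Rightarrow> int" where
  "dseq_z E s W u i = (\<Sum>j = 2..i. dseq_y E s W u j)"

end

theory Submission
  imports Defs
begin

lemma edge_props:
  assumes "graph V E" "{x,y} \<in> E"
  shows "x \<noteq> y \<and> x \<in> V \<and> y \<in> V"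
proof -
  obtain a b where "{x,y} = {a,b}" "a \<in> V" "b \<in> V" "a \<noteq> b"
    using assms unfolding graph_def by blast
  then show ?thesis by (metis doubleton_eq_iff insert_absorb2 singleton_insert_inj_eq)
qed

lemma bij_ivl:
  assumes "finite A"
  shows "\<exists>h. bij_betw h A {a+1..a+card A}"
  using assms by (intro finite_same_card_bij) auto

lemma bij_shift:
  fixes c d :: nat
  assumes "bij_betw g A {1..c}"
  shows "bij_betw (\<lambda>x. d + g x) A {d+1..d+c}"
proof -
  have "bij_betw (\<lambda>n. d + n) {1..c} {d+1..d+c}"
    unfolding bij_betw_def
  proof
    show "inj_on ((+) d) {1..c}" by (simp add: inj_on_def)
    show "(+) d ` {1..c} = {d + 1..d + c}"
    proof safe
      fix y assume "y \<in> {d+1..d+c}"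
      then have "y = d + (y - d)" "y - d \<in> {1..c}" by auto
      then show "y \<in> (+) d ` {1..c}" by blast
    qed auto
  qed
  from bij_betw_trans[OF assms this] show ?thesis by (simp add: o_def)
qed

lemma W_sub:
  assumes "d_sequence V E s W u" "1 \<le> j" "j \<le> s"
  shows "W j \<subseteq> V"
  using assms(2,3)
proof (induction j)
  case 0 then show ?case by simp
next
  case (Suc i)
  show ?case
  proof (cases "i = 0")
    case True then show ?thesis using assms(1) by (simp add: d_sequence_def)
  next
    case False
    then have "W (Suc i) \<subseteq> W i" using assms(1) Suc.prems
      unfolding d_sequence_def nonisolated_in_def by auto
    then show ?thesis using Suc False by auto
  qed
qed

lemma frame:
  assumes G: "graph V E" and D: "d_sequence V E s W u" and j: "1 \<le> j" "j \<le> s"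
  shows "\<forall>K::nat. (\<forall>i. j \<le> i \<and> i \<le> s \<longrightarrow> int K + (\<Sum>l=j..i. dseq_y E s W u l) \<ge> 1) \<longrightarrow>
     (\<exists>g. bij_betw g (W j) {1..card (W j)} \<and>
        (\<forall>x\<in>W j. \<forall>y\<in>W j. {x,y} \<in> E \<longrightarrow> g x + g y \<le> card (W j) + K))"
  using j(2)
proof (induction j rule: inc_induct)
  case base
  have s1: "1 \<le> s" "2 \<le> s" using D by (auto simp: d_sequence_def)
  have finV: "finite V" using G by (simp add: graph_def)
  have fin: "finite (W s)" using W_sub[OF D s1(1) order_refl] finV finite_subset by blast
  define I where "I = isolated_in E (W s)"
  define NI where "NI = nonisolated_in E (W s)"
  have part: "W s = NI \<union> I" "NI \<inter> I = {}"
    unfolding I_def NI_def isolated_in_def nonisolated_in_def by auto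
  have finNI: "finite NI" "finite I" using part fin by (metis finite_Un)+
  have niE: "\<And>x y. x \<in> W s \<Longrightarrow> y \<in> W s \<Longrightarrow> {x,y} \<in> E \<Longrightarrow> x \<in> NI \<and> y \<in> NI"
    unfolding NI_def nonisolated_in_def by (auto, metis insert_commute)
  have stop: "stop_form E (W s)" using D by (simp add: d_sequence_def)
  show ?case
  proof (intro allI impI)
    fix K :: nat
    assume H: "\<forall>i. s \<le> i \<and> i \<le> s \<longrightarrow> 1 \<le> int K + (\<Sum>l = s..i. dseq_y E s W u l)"
    show "\<exists>g. bij_betw g (W s) {1..card (W s)} \<and>
        (\<forall>x\<in>W s. \<forall>y\<in>W s. {x,y} \<in> E \<longrightarrow> g x + g y \<le> card (W s) + K)"
    proof (cases "edgeless_form E (W s)")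
      case True
      then have "NI = {}" by (simp add: edgeless_form_def NI_def)
      moreover obtain g where "bij_betw g (W s) {0+1..0+card (W s)}" using bij_ivl[OF fin] by blast
      ultimately show ?thesis using niE by auto
    next
      case False
      then have cf: "complete_form E (W s)" using stop by (simp add: stop_form_def)
      define r where "r = card NI"
      define m where "m = card I"
      have r2: "r \<ge> 2" using cf by (simp add: complete_form_def r_def NI_def)
      have dd: "dseq_d E s W u s = r - 1" using False by (simp add: dseq_d_def r_def NI_def)
      have "1 \<le> int K + dseq_y E s W u s" using H[rule_format, of s] by simp
      then have rle: "r \<le> K + m + 1"
        using r2 by (simp add: dseq_y_def dd dseq_m_def m_def I_def of_nat_diff)
      obtain g1 where g1: "bij_betw g1 NI {0+1..0+r}" using bij_ivl[OF finNI(1)] r_def by blast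
      obtain g2 where g2: "bij_betw g2 I {r+1..r+m}" using bij_ivl[OF finNI(2)] m_def by blast
      define g where "g = (\<lambda>x. if x \<in> NI then g1 x else g2 x)"
      have b1: "bij_betw g NI {1..r}" using g1 by (auto simp: g_def intro: bij_betw_cong[THEN iffD1])
      have "bij_betw g I {r+1..r+m} = bij_betw g2 I {r+1..r+m}"
        by (rule bij_betw_cong) (use part in \<open>auto simp: g_def\<close>)
      with g2 have b2: "bij_betw g I {r+1..r+m}" by simp
      have "bij_betw g (NI \<union> I) ({1..r} \<union> {r+1..r+m})"
        by (rule bij_betw_combine[OF b1 b2]) auto
      moreover have "{1..r} \<union> {r+1..r+m} = {1..card (W s)}"
        using part finNI by (auto simp: card_Un_disjoint r_def m_def)
      ultimately have bij: "bij_betw g (W s) {1..card (W s)}" using part by simp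
      have cW: "card (W s) = r + m" using part finNI by (simp add: card_Un_disjoint r_def m_def)
      have "\<forall>x\<in>W s. \<forall>y\<in>W s. {x,y} \<in> E \<longrightarrow> g x + g y \<le> card (W s) + K"
      proof (intro ballI impI)
        fix x y assume xy: "x \<in> W s" "y \<in> W s" "{x,y} \<in> E"
        then have n: "x \<in> NI" "y \<in> NI" using niE by auto
        have "x \<noteq> y" using edge_props[OF G xy(3)] by simp
        then have "g x \<noteq> g y" using b1 n unfolding bij_betw_def inj_on_def by blast
        moreover have "g x \<le> r" "g y \<le> r" using b1 n unfolding bij_betw_def by auto
        ultimately show "g x + g y \<le> card (W s) + K" using cW rle by linarith
      qed
      with bij show ?thesis by blast
    qed
  qed
next
  case (step n)
  have n1: "1 \<le> n" using step.hyps j(1) by simp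
  have finV: "finite V" using G by (simp add: graph_def)
  have fin: "finite (W n)" using W_sub[OF D n1] step.hyps finV finite_subset by (metis less_imp_le)
  define I where "I = isolated_in E (W n)"
  define NI where "NI = nonisolated_in E (W n)"
  define B where "B = nbrs_in E NI (u n)"
  define W' where "W' = W (Suc n)"
  have Dn: "\<not> stop_form E (W n)" "u n \<in> NI" "W (Suc n) = NI - insert (u n) B"
    using D n1 step.hyps unfolding d_sequence_def NI_def B_def by auto
  have unB: "u n \<notin> B" using edge_props[OF G, of "u n" "u n"] unfolding B_def nbrs_in_def by auto
  have BNI: "B \<subseteq> NI" unfolding B_def nbrs_in_def by auto
  have part: "W n = B \<union> W' \<union> {u n} \<union> I" using Dn BNI unfolding W'_def
    by (auto simp: I_def NI_def isolated_in_def nonisolated_in_def)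
  have disj: "B \<inter> W' = {}" "u n \<notin> W'" "u n \<notin> I" "B \<inter> I = {}" "W' \<inter> I = {}"
    using Dn BNI unfolding W'_def by (auto simp: I_def NI_def isolated_in_def nonisolated_in_def)
  have fins: "finite B" "finite W'" "finite I" using part fin by (metis finite_Un)+
  define m where "m = card I"
  define d where "d = card B"
  define w where "w = card W'"
  have cW: "card (W n) = d + w + 1 + m"
  proof -
    have "card (B \<union> W') = d + w" using disj fins by (simp add: card_Un_disjoint d_def w_def)
    moreover have "card (B \<union> W' \<union> I) = card (B \<union> W') + m"
      using disj fins by (intro card_Un_disjoint[THEN trans]) (auto simp: m_def)
    moreover have "card (B \<union> W' \<union> {u n} \<union> I) = Suc (card (B \<union> W' \<union> I))"
      using disj fins unB by simp
    ultimately show ?thesis using part by simp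
  qed
  have niE: "\<And>x y. x \<in> W n \<Longrightarrow> y \<in> W n \<Longrightarrow> {x,y} \<in> E \<Longrightarrow> x \<in> NI \<and> y \<in> NI"
    unfolding NI_def nonisolated_in_def by (auto, metis insert_commute)
  have yn: "dseq_y E s W u n = int m + 1 - int d"
    using step.hyps by (simp add: dseq_y_def dseq_d_def dseq_m_def m_def d_def I_def B_def NI_def)
  show ?case
  proof (intro allI impI)
    fix K :: nat
    assume H: "\<forall>i. n \<le> i \<and> i \<le> s \<longrightarrow> 1 \<le> int K + (\<Sum>l = n..i. dseq_y E s W u l)"
    have "1 \<le> int K + dseq_y E s W u n" using H[rule_format, of n] step.hyps by simp
    then have dle: "d \<le> K + m" using yn by simp
    define K' where "K' = K + m + 1 - d"
    have K'i: "int K' = int K + dseq_y E s W u n" using dle yn by (simp add: K'_def of_nat_diff)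
    have "\<forall>i. Suc n \<le> i \<and> i \<le> s \<longrightarrow> 1 \<le> int K' + (\<Sum>l = Suc n..i. dseq_y E s W u l)"
    proof (intro allI impI)
      fix i assume i: "Suc n \<le> i \<and> i \<le> s"
      then have "(\<Sum>l = n..i. dseq_y E s W u l) = dseq_y E s W u n + (\<Sum>l = Suc n..i. dseq_y E s W u l)"
        by (intro sum.atLeast_Suc_atMost) simp
      then show "1 \<le> int K' + (\<Sum>l = Suc n..i. dseq_y E s W u l)" using H[rule_format, of i] i K'i by simp
    qed
    with step.IH obtain g' where g': "bij_betw g' W' {1..w}"
      and g'e: "\<forall>x\<in>W'. \<forall>y\<in>W'. {x,y} \<in> E \<longrightarrow> g' x + g' y \<le> w + K'"
      unfolding W'_def w_def by blast
    obtain gB where gB: "bij_betw gB B {0+1..0+d}" using bij_ivl[OF fins(1)] d_def by blast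
    obtain gI where gI: "bij_betw gI I {(d+w+1)+1..(d+w+1)+m}" using bij_ivl[OF fins(3)] m_def by blast
    define g where "g = (\<lambda>x. if x \<in> B then gB x else if x \<in> W' then d + g' x else if x = u n then d+w+1 else gI x)"
    have "bij_betw g B {1..d} = bij_betw gB B {1..d}"
      by (rule bij_betw_cong) (auto simp: g_def)
    with gB have b1: "bij_betw g B {1..d}" by simp
    have "bij_betw g W' {d+1..d+w} = bij_betw (\<lambda>x. d + g' x) W' {d+1..d+w}"
      by (rule bij_betw_cong) (use disj in \<open>auto simp: g_def\<close>)
    with bij_shift[OF g'] have b2: "bij_betw g W' {d+1..d+w}" by simp
    have b3: "bij_betw g {u n} {d+w+1}" using unB disj by (simp add: g_def bij_betw_def)
    have "bij_betw g I {d+w+2..d+w+1+m} = bij_betw gI I {d+w+2..d+w+1+m}"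
      by (rule bij_betw_cong) (use disj in \<open>auto simp: g_def\<close>)
    with gI have b4: "bij_betw g I {d+w+2..d+w+1+m}" by (simp add: numeral_2_eq_2)
    have "bij_betw g (B \<union> W' \<union> {u n} \<union> I) ({1..d} \<union> {d+1..d+w} \<union> {d+w+1} \<union> {d+w+2..d+w+1+m})"
      by (intro bij_betw_combine b1 b2 b3 b4) auto
    moreover have "{1..d} \<union> {d+1..d+w} \<union> {d+w+1} \<union> {d+w+2..d+w+1+m} = {1..card (W n)}"
      unfolding cW by auto
    ultimately have bij: "bij_betw g (W n) {1..card (W n)}" using part by simp
    have lB: "\<And>x. x \<in> B \<Longrightarrow> g x \<le> d" using b1 unfolding bij_betw_def by auto
    have lW: "\<And>x. x \<in> W' \<Longrightarrow> g x = d + g' x \<and> g' x \<le> w" using g' disj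
      unfolding bij_betw_def g_def by auto
    have lu: "g (u n) = d + w + 1" using unB disj by (simp add: g_def)
    have "\<forall>x\<in>W n. \<forall>y\<in>W n. {x,y} \<in> E \<longrightarrow> g x + g y \<le> card (W n) + K"
    proof (intro ballI impI)
      fix x y assume xy: "x \<in> W n" "y \<in> W n" "{x,y} \<in> E"
      then have nx: "x \<in> NI" "y \<in> NI" using niE by auto
      have xne: "x \<noteq> y" using edge_props[OF G xy(3)] by simp
      have NIp: "NI = B \<union> W' \<union> {u n}" using Dn BNI unfolding W'_def by auto
      have uW: "\<And>z. z \<in> W' \<Longrightarrow> {u n, z} \<notin> E \<and> {z, u n} \<notin> E"
        using Dn NIp unfolding W'_def B_def nbrs_in_def by (auto simp: insert_commute)
      have "x \<in> B \<or> x \<in> W' \<or> x = u n" "y \<in> B \<or> y \<in> W' \<or> y = u n" using nx NIp by auto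
      then show "g x + g y \<le> card (W n) + K"
      proof (elim disjE)
        assume "x \<in> W'" "y \<in> W'"
        then have "g' x + g' y \<le> w + K'" using g'e xy by blast
        then show ?thesis using lW \<open>x \<in> W'\<close> \<open>y \<in> W'\<close> cW dle K'_def by fastforce
      qed (use cW dle xne uW xy(3) in \<open>(auto dest!: lB lW simp: lu)\<close>)+
    qed
    with bij show "\<exists>g. bij_betw g (W n) {1..card (W n)} \<and>
        (\<forall>x\<in>W n. \<forall>y\<in>W n. {x,y} \<in> E \<longrightarrow> g x + g y \<le> card (W n) + K)" by blast
  qed
qed

lemma star_edges_sub:
  assumes G: "graph V E" and e: "e \<in> plus_star_E E k"
  shows "e \<subseteq> plus_star_V V k"
proof -
  have "\<forall>e\<in>E. e \<subseteq> V" using G unfolding graph_def by fastforce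
  then show ?thesis using e unfolding plus_star_E_def plus_star_V_def by auto
qed

lemma str_lower:
  assumes G: "graph V E" and nb: "\<And>v. v \<in> V \<Longrightarrow> \<exists>w\<in>V. {v,w} \<in> E" and k1: "1 \<le> k"
    and h: "numbering (plus_star_V V k) h"
  shows "card (plus_star_V V k) + 1 \<le> str_f (plus_star_E E k) h
       \<and> str_f (plus_star_E E k) h \<le> 2 * card (plus_star_V V k)"
proof -
  let ?VG = "plus_star_V V k" and ?ES = "plus_star_E E k"
  define p where "p = card ?VG"
  let ?S = "{h a + h b | a b. {a,b} \<in> ?ES}"
  have hb: "bij_betw h ?VG {1..p}" using h by (simp add: numbering_def p_def)
  have inV: "\<And>a b. {a,b} \<in> ?ES \<Longrightarrow> a \<in> ?VG \<and> b \<in> ?VG" using star_edges_sub[OF G] by blast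
  have hle: "\<And>a. a \<in> ?VG \<Longrightarrow> 1 \<le> h a \<and> h a \<le> p" using hb unfolding bij_betw_def by auto
  have Ssub: "?S \<subseteq> {..2*p}"
  proof
    fix z assume "z \<in> ?S"
    then obtain a b where "z = h a + h b" "{a,b} \<in> ?ES" by blast
    then have "h a \<le> p" "h b \<le> p" using inV hle by blast+
    then show "z \<in> {..2*p}" using \<open>z = h a + h b\<close> by simp
  qed
  then have finS: "finite ?S" using finite_subset by blast
  obtain x where x: "x \<in> ?VG" "h x = p"
  proof -
    have "finite ?VG" "Inr 0 \<in> ?VG" using G unfolding plus_star_V_def graph_def by auto
    then have "card ?VG > 0" using card_gt_0_iff by blast
    then have "p \<in> {1..p}" using p_def by simp
    then show ?thesis using hb that unfolding bij_betw_def by (metis imageE)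
  qed
  have "\<exists>y. {x,y} \<in> ?ES"
  proof -
    consider (l) v where "x = Inl v" "v \<in> V" | (r0) "x = Inr 0" | (r) j where "x = Inr j" "j \<in> {1..k}"
      using x(1) unfolding plus_star_V_def by force
    then show ?thesis
    proof cases
      case l
      then obtain w where "w \<in> V" "{v,w} \<in> E" using nb by blast
      then have "Inl ` {v,w} \<in> ?ES" unfolding plus_star_E_def by blast
      then show ?thesis using l by auto
    next
      case r0
      then show ?thesis using k1 unfolding plus_star_E_def by auto
    next
      case r
      then have "{Inr 0, x} \<in> ?ES" unfolding plus_star_E_def by auto
      then show ?thesis by (metis insert_commute)
    qed
  qed
  then obtain y where y: "{x,y} \<in> ?ES" by blast
  then have "h x + h y \<in> ?S" by blast
  moreover have "h x + h y \<ge> p + 1" using x hle inV[OF y] by simp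
  ultimately have "p + 1 \<le> Max ?S" using finS by (meson Max_ge order_trans)
  moreover have "Max ?S \<le> 2 * p" using Ssub finS \<open>h x + h y \<in> ?S\<close>
    by (metis (no_types, lifting) Max_in atMost_iff empty_iff subsetD)
  ultimately show ?thesis by (simp add: str_f_def p_def)
qed

theorem mainTheorem9:
  fixes V :: "'a set" and E :: "'a set set" and s k :: nat
    and W :: "nat \<Rightarrow> 'a set" and u :: "nat \<Rightarrow> 'a"
  assumes "graph V E"
    and "1 \<le> min_degree V E" and "min_degree V E \<le> card V - 2"
    and "d_sequence V E s W u"
    and "Min {dseq_z E s W u i | i. 2 \<le> i \<and> i \<le> s} \<le> 0"
    and "int k \<ge> int (dseq_d E s W u 1) - Min {dseq_z E s W u i | i. 2 \<le> i \<and> i \<le> s}"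
  shows "strength (plus_star_V V k) (plus_star_E E k) = card (plus_star_V V k) + 1"
proof -
  note G = assms(1) and D = assms(4)
  have finV: "finite V" using G by (simp add: graph_def)
  have s2: "2 \<le> s" and W1: "W 1 = V" using D by (auto simp: d_sequence_def)
  have W1': "W (Suc 0) = V" using W1 by simp
  have nb: "\<And>v. v \<in> V \<Longrightarrow> \<exists>w\<in>V. {v,w} \<in> E"
  proof -
    fix v assume v: "v \<in> V"
    have "min_degree V E \<le> degree V E v" unfolding min_degree_def using finV v by simp
    then have "card {w \<in> V. {v, w} \<in> E} \<noteq> 0" using assms(2) by (simp add: degree_def)
    then show "\<exists>w\<in>V. {v,w} \<in> E" by (metis (no_types, lifting) card.empty empty_Collect_eq)
  qed
  have iso0: "isolated_in E V = {}" using nb by (auto simp: isolated_in_def)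
  have NIV: "nonisolated_in E V = V" using nb by (auto simp: nonisolated_in_def)
  define d1 where "d1 = dseq_d E s W u 1"
  have d1: "d1 = card (nbrs_in E V (u 1))" using s2 by (simp add: d1_def dseq_d_def W1' NIV)
  have "u 1 \<in> V" using D s2 NIV W1 unfolding d_sequence_def by force
  then obtain w where "w \<in> V" "{u 1, w} \<in> E" using nb by blast
  then have "nbrs_in E V (u 1) \<noteq> {}" by (auto simp: nbrs_in_def)
  moreover have "finite (nbrs_in E V (u 1))" using finV by (simp add: nbrs_in_def)
  ultimately have d1pos: "1 \<le> d1" using d1 by (simp add: Suc_le_eq card_gt_0_iff)
  define Z where "Z = Min {dseq_z E s W u i | i. 2 \<le> i \<and> i \<le> s}"
  have Zset: "{dseq_z E s W u i | i. 2 \<le> i \<and> i \<le> s} = dseq_z E s W u ` {2..s}" by auto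
  have Zle: "\<And>i. 2 \<le> i \<Longrightarrow> i \<le> s \<Longrightarrow> Z \<le> dseq_z E s W u i"
    unfolding Z_def Zset by simp
  have kge: "int k \<ge> int d1 - Z" using assms(6) by (simp add: d1_def Z_def)
  have Z0: "Z \<le> 0" using assms(5) by (simp add: Z_def)
  have y1: "dseq_y E s W u 1 = 1 - int d1" by (simp add: dseq_y_def dseq_m_def W1' iso0 d1_def)
  have hyp: "\<forall>i. 1 \<le> i \<and> i \<le> s \<longrightarrow> int k + (\<Sum>l=1..i. dseq_y E s W u l) \<ge> 1"
  proof (intro allI impI)
    fix i assume i: "1 \<le> i \<and> i \<le> s"
    have "(\<Sum>l=1..i. dseq_y E s W u l) = dseq_y E s W u 1 + (\<Sum>l=Suc 1..i. dseq_y E s W u l)"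
      using i by (intro sum.atLeast_Suc_atMost) simp
    also have "\<dots> = 1 - int d1 + dseq_z E s W u i" using y1 by (simp add: dseq_z_def numeral_2_eq_2)
    finally have eq: "(\<Sum>l=1..i. dseq_y E s W u l) = 1 - int d1 + dseq_z E s W u i" .
    show "int k + (\<Sum>l=1..i. dseq_y E s W u l) \<ge> 1"
    proof (cases "i = 1")
      case True
      then have "dseq_z E s W u i = 0" by (simp add: dseq_z_def)
      then show ?thesis using eq kge Z0 by simp
    next
      case False
      then show ?thesis using eq kge Zle[of i] i by simp
    qed
  qed
  obtain g where gb: "bij_betw g V {1..card V}"
    and ge: "\<forall>x\<in>V. \<forall>y\<in>V. {x,y} \<in> E \<longrightarrow> g x + g y \<le> card V + k"
  proof -
    have s1: "1 \<le> s" using s2 by simp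
    from mp[OF spec[OF frame[OF G D order_refl s1], of k] hyp] that show ?thesis unfolding W1 by blast
  qed
  have k1: "1 \<le> k" using kge Z0 d1pos by simp
  define n where "n = card V"
  let ?VG = "plus_star_V V k" and ?ES = "plus_star_E E k"
  have cVG: "card ?VG = n + k + 1"
  proof -
    have "card (Inl ` V :: ('a + nat) set) = n" by (simp add: card_image n_def)
    moreover have "card (Inr ` {0..k} :: ('a + nat) set) = k + 1" by (simp add: card_image)
    ultimately show ?thesis unfolding plus_star_V_def using finV
      by (subst card_Un_disjoint) auto
  qed
  define f :: "'a + nat \<Rightarrow> nat" where "f = case_sum (\<lambda>v. g v + 1) (\<lambda>j. if j = 0 then 1 else n + 1 + j)"
  have b1: "bij_betw f (Inl ` V) {1+1..1+n}"
  proof -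
    have "bij_betw Inl V (Inl ` V)" by (simp add: bij_betw_def)
    moreover have "bij_betw (f \<circ> Inl) V {1+1..1+n}"
    proof -
      have "bij_betw (\<lambda>x. 1 + g x) V {1+1..1+n}" using bij_shift[OF gb, of 1] n_def by simp
      then show ?thesis by (simp add: f_def o_def)
    qed
    ultimately show ?thesis using bij_betw_comp_iff by blast
  qed
  have b2: "bij_betw f {Inr 0} {1}" by (simp add: f_def bij_betw_def)
  have b3: "bij_betw f (Inr ` {1..k}) {(n+1)+1..(n+1)+k}"
  proof -
    have "bij_betw Inr {1..k} (Inr ` {1..k})" by (simp add: bij_betw_def)
    moreover have "bij_betw (f \<circ> Inr) {1..k} {(n+1)+1..(n+1)+k}"
    proof -
      have "bij_betw (\<lambda>x. (n+1) + id x) {1..k} {(n+1)+1..(n+1)+k}"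
        by (rule bij_shift[OF bij_betw_id[of "{1..k}"]])
      moreover have "bij_betw (f \<circ> Inr) {1..k} {(n+1)+1..(n+1)+k} = bij_betw (\<lambda>x. (n+1) + id x) {1..k} {(n+1)+1..(n+1)+k}"
        by (rule bij_betw_cong) (auto simp: f_def)
      ultimately show ?thesis by simp
    qed
    ultimately show ?thesis using bij_betw_comp_iff by blast
  qed
  have "bij_betw f (Inl ` V \<union> {Inr 0} \<union> Inr ` {1..k}) ({1+1..1+n} \<union> {1} \<union> {(n+1)+1..(n+1)+k})"
    by (intro bij_betw_combine b1 b2 b3) auto
  moreover have "Inl ` V \<union> {Inr 0} \<union> Inr ` {1..k} = ?VG"
    unfolding plus_star_V_def
  proof -
    have "{0..k} = insert 0 {1..k}" by auto
    then show "Inl ` V \<union> {Inr 0} \<union> Inr ` {1..k} = Inl ` V \<union> Inr ` {0..k}" by auto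
  qed
  moreover have "{1+1..1+n} \<union> {1} \<union> {(n+1)+1..(n+1)+k} = {1..card ?VG}" unfolding cVG by auto
  ultimately have num: "numbering ?VG f" by (simp add: numbering_def)
  have up: "str_f ?ES f \<le> n + k + 2"
  proof -
    let ?S = "{f a + f b | a b. {a,b} \<in> ?ES}"
    have "finite ?S" "?S \<noteq> {}"
    proof -
      have "?S \<subseteq> {..2 * card ?VG}"
      proof
        fix z assume "z \<in> ?S"
        then obtain a b where ab: "z = f a + f b" "{a,b} \<in> ?ES" by blast
        then have "a \<in> ?VG" "b \<in> ?VG" using star_edges_sub[OF G ab(2)] by auto
        then have "f a \<le> card ?VG" "f b \<le> card ?VG" using num unfolding numbering_def bij_betw_def by auto
        then show "z \<in> {..2 * card ?VG}" using ab by simp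
      qed
      then show "finite ?S" using finite_subset by blast
      have "{Inr 0, Inr 1} \<in> ?ES" using k1 unfolding plus_star_E_def by auto
      then show "?S \<noteq> {}" by blast
    qed
    moreover have "\<forall>z\<in>?S. z \<le> n + k + 2"
    proof
      fix z assume "z \<in> ?S"
      then obtain a b where ab: "z = f a + f b" "{a,b} \<in> ?ES" by blast
      then consider (l) e where "e \<in> E" "{a,b} = Inl ` e" | (r) j where "j \<in> {1..k}" "{a,b} = {Inr 0, Inr j}"
        unfolding plus_star_E_def by auto
      then show "z \<le> n + k + 2"
      proof cases
        case l
        obtain x y where xy: "e = {x,y}" "x \<in> V" "y \<in> V" using G l(1) unfolding graph_def by blast
        then have "g x + g y \<le> n + k" using ge l(1) n_def by blast
        moreover have "{a,b} = {Inl x, Inl y}" using l xy by simp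
        ultimately show ?thesis using ab(1) unfolding doubleton_eq_iff by (elim disjE) (simp_all add: f_def)
      next
        case r
        then show ?thesis using ab(1) unfolding doubleton_eq_iff by (elim disjE conjE) (simp_all add: f_def)
      qed
    qed
    ultimately show ?thesis unfolding str_f_def by simp
  qed
  define T where "T = {str_f ?ES h | h. numbering ?VG h}"
  have lowT: "\<And>t. t \<in> T \<Longrightarrow> card ?VG + 1 \<le> t \<and> t \<le> 2 * card ?VG"
  proof -
    fix t assume "t \<in> T"
    then obtain h where "t = str_f ?ES h" "numbering ?VG h" unfolding T_def by blast
    then show "card ?VG + 1 \<le> t \<and> t \<le> 2 * card ?VG" using str_lower[OF G nb k1] by simp
  qed
  have finT: "finite T" using lowT by (intro finite_subset[of T "{..2 * card ?VG}"]) auto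
  have fT: "str_f ?ES f \<in> T" using num unfolding T_def by blast
  have "str_f ?ES f = card ?VG + 1" using lowT[OF fT] up cVG by simp
  then have "Min T = card ?VG + 1"
    using fT finT lowT by (intro Min_eqI) auto
  then show ?thesis unfolding strength_def T_def .
qed

end
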